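(* Let $G=(V,E)$ be a finite graph of maximum degree $\Delta$, and for $u\in V$ let $d_u$ denote the degree of $u$. Let $\boldsymbol\lambda\in[0,\infty)^{V}$ satisfy $\lambda_u<1/\Delta$ for all $u\in V$. Then \[ \mathbb{E}_{G,\boldsymbol\lambda}|I| \;\ge\; \sum_{u\in V}\frac{\lambda_u}{1+(d_u+1)\lambda_u}. \]
   Context: For a graph $G=(V,E)$, $\mathcal I(G)$ denotes the set of independent sets of $G$ (including $\emptyset$). For a fugacity vector $\boldsymbol\lambda\in[0,\infty)^V$, the hard-core model is the probability measure on $\mathcal I(G)$ given by $\Pr_{G,\boldsymbol\lambda}(I)=\frac{1}{Z_G(\boldsymbol\lambda)}\prod_{v\in I}\lambda_v$, where $Z_G(\boldsymbol\lambda)=\sum_{J\in\mathcal I(G)}\prod_{v\in J}\lambda_v$. $\mathbb{E}_{G,\boldsymbol\lambda}$ denotes expectation with respect to this measure, and $I$ denotes the random independent set. *)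

theory Defs
  imports "HOL-Analysis.Analysis"
begin

definition simple_graph :: "'a set \<Rightarrow> ('a \<Rightarrow> 'a \<Rightarrow> bool) \<Rightarrow> bool" where
  "simple_graph V E \<longleftrightarrow> finite V \<and> (\<forall>u v. E u v \<longrightarrow> u \<in> V \<and> v \<in> V)
     \<and> (\<forall>u v. E u v \<longrightarrow> E v u) \<and> (\<forall>u. \<not> E u u)"

definition degree :: "'a set \<Rightarrow> ('a \<Rightarrow> 'a \<Rightarrow> bool) \<Rightarrow> 'a \<Rightarrow> nat" where
  "degree V E u = card {v \<in> V. E u v}"

definition max_degree :: "'a set \<Rightarrow> ('a \<Rightarrow> 'a \<Rightarrow> bool) \<Rightarrow> nat" where
  "max_degree V E = (if V = {} then 0 else Max (degree V E ` V))"

definition independent_sets :: "'a set \<Rightarrow> ('a \<Rightarrow> 'a \<Rightarrow> bool) \<Rightarrow> 'a set set" where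
  "independent_sets V E = {I. I \<subseteq> V \<and> (\<forall>u\<in>I. \<forall>v\<in>I. \<not> E u v)}"

definition weight :: "('a \<Rightarrow> real) \<Rightarrow> 'a set \<Rightarrow> real" where
  "weight lam I = (\<Prod>v\<in>I. lam v)"

definition partition_fn :: "'a set \<Rightarrow> ('a \<Rightarrow> 'a \<Rightarrow> bool) \<Rightarrow> ('a \<Rightarrow> real) \<Rightarrow> real" where
  "partition_fn V E lam = (\<Sum>J\<in>independent_sets V E. weight lam J)"

definition hardcore_prob :: "'a set \<Rightarrow> ('a \<Rightarrow> 'a \<Rightarrow> bool) \<Rightarrow> ('a \<Rightarrow> real) \<Rightarrow> 'a set \<Rightarrow> real" where
  "hardcore_prob V E lam I = weight lam I / partition_fn V E lam"

definition expected_size :: "'a set \<Rightarrow> ('a \<Rightarrow> 'a \<Rightarrow> bool) \<Rightarrow> ('a \<Rightarrow> real) \<Rightarrow> real" where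
  "expected_size V E lam = (\<Sum>I\<in>independent_sets V E. real (card I) * hardcore_prob V E lam I)"

end

theory Submission
  imports Defs
begin

lemma swapN:
  assumes fin: "finite V" and sym: "\<And>u v. E u v \<Longrightarrow> E v u"
  shows "(\<Sum>v\<in>V. \<Sum>u\<in>{u\<in>V. E v u}. f u v) = (\<Sum>u\<in>V. \<Sum>v\<in>{v\<in>V. E u v}. f u v)"
proof -
  have "(\<Sum>v\<in>V. \<Sum>u\<in>{u\<in>V. E v u}. f u v) = (\<Sum>v\<in>V. \<Sum>u\<in>V. if E v u then f u v else 0)"
    by (simp add: sum.inter_filter[OF fin])
  also have "\<dots> = (\<Sum>u\<in>V. \<Sum>v\<in>V. if E v u then f u v else 0)"
    by (rule sum.swap)
  also have "\<dots> = (\<Sum>u\<in>V. \<Sum>v\<in>V. if E u v then f u v else 0)"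
    by (intro sum.cong refl) (metis sym)
  also have "\<dots> = (\<Sum>u\<in>V. \<Sum>v\<in>{v\<in>V. E u v}. f u v)"
    by (simp add: sum.inter_filter[OF fin])
  finally show ?thesis .
qed

fun gam :: "('a \<Rightarrow> real) \<Rightarrow> 'a set \<Rightarrow> ('a \<Rightarrow> 'a \<Rightarrow> bool) \<Rightarrow> nat \<Rightarrow> 'a \<Rightarrow> real" where
  "gam mu V E 0 = (\<lambda>v. 0)"
| "gam mu V E (Suc n) = (\<lambda>v. 1 - (\<Sum>u\<in>{u\<in>V. E v u}. mu u * gam mu V E n u))"

lemma gam_bounds:
  assumes mu0: "\<And>v. v \<in> V \<Longrightarrow> mu v \<ge> 0"
    and musum: "\<And>v. v \<in> V \<Longrightarrow> (\<Sum>u\<in>{u\<in>V. E v u}. mu u) \<le> 1"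
  shows "\<forall>v\<in>V. 0 \<le> gam mu V E n v \<and> gam mu V E n v \<le> 1"
proof (induction n)
  case 0
  then show ?case by simp
next
  case (Suc n)
  show ?case
  proof
    fix v assume v: "v \<in> V"
    have a: "(\<Sum>u\<in>{u\<in>V. E v u}. mu u * gam mu V E n u) \<le> (\<Sum>u\<in>{u\<in>V. E v u}. mu u)"
      by (intro sum_mono) (use Suc mu0 in \<open>auto intro: mult_left_le\<close>)
    have b: "(\<Sum>u\<in>{u\<in>V. E v u}. mu u * gam mu V E n u) \<ge> 0"
      by (intro sum_nonneg) (use Suc mu0 in auto)
    show "0 \<le> gam mu V E (Suc n) v \<and> gam mu V E (Suc n) v \<le> 1"
      using a b musum[OF v] by simp
  qed
qed

lemma gam_diff:
  assumes mu0: "\<And>v. v \<in> V \<Longrightarrow> mu v \<ge> 0"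
    and musum: "\<And>v. v \<in> V \<Longrightarrow> (\<Sum>u\<in>{u\<in>V. E v u}. mu u) \<le> q"
  shows "\<forall>v\<in>V. \<bar>gam mu V E (Suc n) v - gam mu V E n v\<bar> \<le> q ^ n"
proof (induction n)
  case 0
  then show ?case by simp
next
  case (Suc n)
  show ?case
  proof
    fix v assume v: "v \<in> V"
    have "gam mu V E (Suc (Suc n)) v - gam mu V E (Suc n) v =
       - (\<Sum>u\<in>{u\<in>V. E v u}. mu u * (gam mu V E (Suc n) u - gam mu V E n u))"
      by (simp add: sum_subtractf right_diff_distrib)
    then have "\<bar>gam mu V E (Suc (Suc n)) v - gam mu V E (Suc n) v\<bar>
       \<le> (\<Sum>u\<in>{u\<in>V. E v u}. \<bar>mu u * (gam mu V E (Suc n) u - gam mu V E n u)\<bar>)"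
      by (simp add: sum_abs)
    also have "\<dots> \<le> (\<Sum>u\<in>{u\<in>V. E v u}. mu u * q ^ n)"
      by (intro sum_mono) (use Suc mu0 in \<open>auto simp: abs_mult intro: mult_left_mono\<close>)
    also have "\<dots> = (\<Sum>u\<in>{u\<in>V. E v u}. mu u) * q ^ n"
      by (simp add: sum_distrib_right)
    also have "\<dots> \<le> q * q ^ n"
      by (intro mult_right_mono musum[OF v]) (use Suc v in \<open>auto intro: order_trans[OF abs_ge_zero]\<close>)
    finally show "\<bar>gam mu V E (Suc (Suc n)) v - gam mu V E (Suc n) v\<bar> \<le> q ^ Suc n" by simp
  qed
qed

lemma main_ineq:
  fixes V :: "'a set" and E :: "'a \<Rightarrow> 'a \<Rightarrow> bool" and mu p gm :: "'a \<Rightarrow> real" and eta :: real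
  assumes fin: "finite V" and sym: "\<And>u v. E u v \<Longrightarrow> E v u"
    and mu0: "\<And>v. v \<in> V \<Longrightarrow> mu v \<ge> 0"
    and musum: "\<And>v. v \<in> V \<Longrightarrow> (\<Sum>u\<in>{u\<in>V. E v u}. mu u) \<le> 1"
    and p0: "\<And>v. v \<in> V \<Longrightarrow> p v \<ge> 0"
    and pc: "\<And>v. v \<in> V \<Longrightarrow> p v + mu v * (\<Sum>u\<in>{u\<in>V. E v u}. p u) \<ge> mu v"
    and g0: "\<And>v. v \<in> V \<Longrightarrow> gm v \<ge> 0" and g1: "\<And>v. v \<in> V \<Longrightarrow> gm v \<le> 1"
    and eps: "\<And>v. v \<in> V \<Longrightarrow> \<bar>1 - (\<Sum>u\<in>{u\<in>V. E v u}. mu u * gm u) - gm v\<bar> \<le> eta"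
  shows "(\<Sum>v\<in>V. p v) \<ge> (\<Sum>v\<in>V. mu v / (1 + real (card {u\<in>V. E v u}) * mu v))
           - eta * (\<Sum>v\<in>V. p v + 3 * mu v)"
proof -
  define N where "N v = {u\<in>V. E v u}" for v
  define S where "S v = (\<Sum>u\<in>N v. mu u * gm u)" for v
  define bt where "bt v = 1 / (1 + real (card (N v)) * mu v)" for v
  define a where "a v = mu v * gm v" for v
  define b where "b v = mu v * bt v" for v
  define y where "y v = gm v + S v" for v
  define z where "z v = gm v - bt v" for v
  define x where "x v = a v - b v" for v
  have sw: "(\<Sum>v\<in>V. \<Sum>u\<in>N v. f u v) = (\<Sum>u\<in>V. \<Sum>v\<in>N u. f u v)" for f
    unfolding N_def by (rule swapN[OF fin sym])
  have den: "1 + real (card (N v)) * mu v > 0" if "v \<in> V" for v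
    using mu0[OF that] by (simp add: add_pos_nonneg)
  have bt0: "bt v > 0" if "v \<in> V" for v using den[OF that] by (simp add: bt_def)
  have bt1: "bt v \<le> 1" if "v \<in> V" for v
    using den[OF that] mu0[OF that] by (simp add: bt_def)
  have bteq: "bt v * (1 + real (card (N v)) * mu v) = 1" if "v \<in> V" for v
    using den[OF that] by (simp add: bt_def)
  have a0: "a v \<ge> 0" if "v \<in> V" for v using mu0[OF that] g0[OF that] by (simp add: a_def)
  have b0: "b v \<ge> 0" if "v \<in> V" for v using mu0[OF that] bt0[OF that] by (simp add: b_def)
  have ale: "a v \<le> mu v" if "v \<in> V" for v
    using mu0[OF that] g1[OF that] by (simp add: a_def mult_left_le)
  have ble: "b v \<le> mu v" if "v \<in> V" for v
    using mu0[OF that] bt1[OF that] by (simp add: b_def mult_left_le)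
  have yle: "y v \<le> 1 + eta" "y v \<ge> 1 - eta" if "v \<in> V" for v
    using eps[OF that] unfolding y_def S_def N_def by (auto simp: abs_le_iff)
  have I1: "(\<Sum>v\<in>V. p v * y v) \<ge> (\<Sum>v\<in>V. a v)"
  proof -
    have "(\<Sum>v\<in>V. a v) \<le> (\<Sum>v\<in>V. gm v * (p v + mu v * (\<Sum>u\<in>N v. p u)))"
      unfolding a_def N_def
      by (intro sum_mono) (use pc g0 in \<open>auto simp: mult.commute intro: mult_left_mono\<close>)
    also have "\<dots> = (\<Sum>v\<in>V. gm v * p v) + (\<Sum>v\<in>V. \<Sum>u\<in>N v. mu v * gm v * p u)"
      by (simp add: sum.distrib sum_distrib_left algebra_simps)
    also have "(\<Sum>v\<in>V. \<Sum>u\<in>N v. mu v * gm v * p u) = (\<Sum>u\<in>V. \<Sum>v\<in>N u. mu v * gm v * p u)"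
      by (rule sw)
    also have "\<dots> = (\<Sum>u\<in>V. p u * S u)"
      by (simp add: S_def sum_distrib_left algebra_simps)
    also have "(\<Sum>v\<in>V. gm v * p v) + (\<Sum>u\<in>V. p u * S u) = (\<Sum>v\<in>V. p v * y v)"
      by (simp add: y_def sum.distrib algebra_simps)
    finally show ?thesis .
  qed
  have F1: "(\<Sum>v\<in>V. b v) = (\<Sum>v\<in>V. mu v * bt v ^ 2) + (\<Sum>v\<in>V. \<Sum>u\<in>N v. b v ^ 2)"
  proof -
    have "b v = mu v * bt v ^ 2 + (\<Sum>u\<in>N v. b v ^ 2)" if "v \<in> V" for v
    proof -
      have "b v = mu v * bt v * (bt v * (1 + real (card (N v)) * mu v))"
        using bteq[OF that] by (simp add: b_def)
      then show ?thesis by (simp add: b_def power2_eq_square algebra_simps)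
    qed
    then have "(\<Sum>v\<in>V. b v) = (\<Sum>v\<in>V. mu v * bt v ^ 2 + (\<Sum>u\<in>N v. b v ^ 2))"
      by (intro sum.cong refl)
    then show ?thesis by (simp only: sum.distrib)
  qed
  have F2: "(\<Sum>v\<in>V. \<Sum>u\<in>N v. b u ^ 2) = (\<Sum>v\<in>V. \<Sum>u\<in>N v. b v ^ 2)"
    using sw[of "\<lambda>u v. b u ^ 2"] by simp
  have F3a: "(\<Sum>v\<in>V. b v * S v) = (\<Sum>v\<in>V. \<Sum>u\<in>N v. a u * b v)"
    by (simp add: S_def a_def sum_distrib_left algebra_simps)
  have F3b: "(\<Sum>v\<in>V. \<Sum>u\<in>N v. b u * a v) = (\<Sum>v\<in>V. b v * S v)"
  proof -
    have "(\<Sum>v\<in>V. \<Sum>u\<in>N v. b u * a v) = (\<Sum>u\<in>V. \<Sum>v\<in>N u. b u * a v)" by (rule sw)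
    also have "\<dots> = (\<Sum>v\<in>V. b v * S v)"
      by (simp add: S_def a_def sum_distrib_left algebra_simps)
    finally show ?thesis .
  qed
  have F4: "(\<Sum>v\<in>V. a v * S v) = (\<Sum>v\<in>V. \<Sum>u\<in>N v. a u * a v)"
    by (simp add: S_def a_def sum_distrib_left algebra_simps)
  have F5: "(\<Sum>v\<in>V. mu v * z v ^ 2) + (\<Sum>v\<in>V. \<Sum>u\<in>N v. x u * x v) \<ge> 0"
  proof -
    have q1: "(\<Sum>v\<in>V. \<Sum>u\<in>N v. x u * x v) \<ge> (\<Sum>v\<in>V. \<Sum>u\<in>N v. - (mu u * mu v * (z u ^ 2 + z v ^ 2)) / 2)"
    proof (intro sum_mono)
      fix v u assume v: "v \<in> V" and u: "u \<in> N v"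
      have uV: "u \<in> V" using u by (simp add: N_def)
      have "0 \<le> mu u * mu v * (z u + z v) ^ 2"
        using mu0[OF v] mu0[OF uV] by simp
      moreover have "x u * x v = mu u * mu v * z u * z v"
        by (simp add: x_def a_def b_def z_def algebra_simps)
      ultimately show "- (mu u * mu v * (z u ^ 2 + z v ^ 2)) / 2 \<le> x u * x v"
        by (simp add: power2_eq_square algebra_simps)
    qed
    have q2: "(\<Sum>v\<in>V. \<Sum>u\<in>N v. - (mu u * mu v * (z u ^ 2 + z v ^ 2)) / 2)
       = - ((\<Sum>v\<in>V. \<Sum>u\<in>N v. mu u * mu v * z u ^ 2) + (\<Sum>v\<in>V. \<Sum>u\<in>N v. mu u * mu v * z v ^ 2)) / 2"
    proof -
      have "(\<Sum>v\<in>V. \<Sum>u\<in>N v. - (mu u * mu v * (z u ^ 2 + z v ^ 2)) / 2)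
          = (\<Sum>v\<in>V. \<Sum>u\<in>N v. (-1/2) * (mu u * mu v * z u ^ 2) + (-1/2) * (mu u * mu v * z v ^ 2))"
        by (intro sum.cong refl) (simp add: field_simps)
      also have "\<dots> = (-1/2) * (\<Sum>v\<in>V. \<Sum>u\<in>N v. mu u * mu v * z u ^ 2) + (-1/2) * (\<Sum>v\<in>V. \<Sum>u\<in>N v. mu u * mu v * z v ^ 2)"
        by (simp only: sum.distrib sum_distrib_left)
      finally show ?thesis by simp
    qed
    have q3: "(\<Sum>v\<in>V. \<Sum>u\<in>N v. mu u * mu v * z u ^ 2) = (\<Sum>v\<in>V. \<Sum>u\<in>N v. mu u * mu v * z v ^ 2)"
      using sw[of "\<lambda>u v. mu u * mu v * z u ^ 2"] by (simp add: mult.commute)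
    have "(\<Sum>v\<in>V. \<Sum>u\<in>N v. mu u * mu v * z v ^ 2) = (\<Sum>v\<in>V. (\<Sum>u\<in>N v. mu u) * (mu v * z v ^ 2))"
      by (intro sum.cong refl) (simp add: sum_distrib_right mult.assoc)
    also have "\<dots> \<le> (\<Sum>v\<in>V. mu v * z v ^ 2)"
    proof (intro sum_mono)
      fix v assume v: "v \<in> V"
      have "0 \<le> mu v * z v ^ 2"  using mu0[OF v] by simp
      then show "(\<Sum>u\<in>N v. mu u) * (mu v * z v ^ 2) \<le> mu v * z v ^ 2"
        using musum[OF v] unfolding N_def by (metis mult_left_le_one_le mult.commute mult_left_le)
    qed
    finally have q4: "(\<Sum>v\<in>V. \<Sum>u\<in>N v. mu u * mu v * z v ^ 2) \<le> (\<Sum>v\<in>V. mu v * z v ^ 2)" .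
    have "(\<Sum>v\<in>V. \<Sum>u\<in>N v. - (mu u * mu v * (z u ^ 2 + z v ^ 2)) / 2)
       = - (\<Sum>v\<in>V. \<Sum>u\<in>N v. mu u * mu v * z v ^ 2)"
      unfolding q2 q3 by simp
    then show ?thesis using q1 q4 by linarith
  qed
  have F6: "(\<Sum>v\<in>V. \<Sum>u\<in>N v. x u * x v) \<le> (\<Sum>v\<in>V. \<Sum>u\<in>N v. a u * a v) - (\<Sum>v\<in>V. \<Sum>u\<in>N v. a u * b v)
      - (\<Sum>v\<in>V. \<Sum>u\<in>N v. b u * a v) + ((\<Sum>v\<in>V. \<Sum>u\<in>N v. b u ^ 2) + (\<Sum>v\<in>V. \<Sum>u\<in>N v. b v ^ 2)) / 2"
  proof -
    have "(\<Sum>v\<in>V. \<Sum>u\<in>N v. x u * x v) \<le> (\<Sum>v\<in>V. \<Sum>u\<in>N v. a u * a v + (-1) * (a u * b v) + (-1) * (b u * a v) + (1/2) * (b u ^ 2) + (1/2) * (b v ^ 2))"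
    proof (intro sum_mono)
      fix v u
      have "0 \<le> (b u - b v) ^ 2" by simp
      then show "x u * x v \<le> a u * a v + (-1) * (a u * b v) + (-1) * (b u * a v) + (1/2) * (b u ^ 2) + (1/2) * (b v ^ 2)"
        by (simp add: x_def power2_eq_square algebra_simps)
    qed
    also have "\<dots> = (\<Sum>v\<in>V. \<Sum>u\<in>N v. a u * a v) + (-1) * (\<Sum>v\<in>V. \<Sum>u\<in>N v. a u * b v)
      + (-1) * (\<Sum>v\<in>V. \<Sum>u\<in>N v. b u * a v) + (1/2) * (\<Sum>v\<in>V. \<Sum>u\<in>N v. b u ^ 2) + (1/2) * (\<Sum>v\<in>V. \<Sum>u\<in>N v. b v ^ 2)"
      by (simp only: sum.distrib sum_distrib_left)
    finally show ?thesis by (simp add: add_divide_distrib)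
  qed
  have E1: "(\<Sum>v\<in>V. a v * y v) = (\<Sum>v\<in>V. mu v * gm v ^ 2) + (\<Sum>v\<in>V. a v * S v)"
    by (simp add: a_def y_def sum.distrib power2_eq_square algebra_simps)
  have E2: "(\<Sum>v\<in>V. b v * y v) = (\<Sum>v\<in>V. mu v * bt v * gm v) + (\<Sum>v\<in>V. b v * S v)"
    by (simp add: b_def y_def sum.distrib algebra_simps)
  have E3: "(\<Sum>v\<in>V. mu v * z v ^ 2) = (\<Sum>v\<in>V. mu v * gm v ^ 2) - 2 * (\<Sum>v\<in>V. mu v * bt v * gm v) + (\<Sum>v\<in>V. mu v * bt v ^ 2)"
    by (simp add: z_def power2_eq_square sum.distrib sum_subtractf sum_distrib_left algebra_simps)
  have G: "(\<Sum>v\<in>V. a v * y v) \<ge> 2 * (\<Sum>v\<in>V. b v * y v) - (\<Sum>v\<in>V. b v)"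
  proof -
    have X1: "(\<Sum>v\<in>V. \<Sum>u\<in>N v. x u * x v) \<le> (\<Sum>v\<in>V. a v * S v) - 2 * (\<Sum>v\<in>V. b v * S v) + (\<Sum>v\<in>V. \<Sum>u\<in>N v. b v ^ 2)"
      using F6 unfolding F2 F3b F4[symmetric] F3a[symmetric] by (simp add: field_simps)
    have X2: "0 \<le> (\<Sum>v\<in>V. mu v * gm v ^ 2) - 2 * (\<Sum>v\<in>V. mu v * bt v * gm v) + (\<Sum>v\<in>V. mu v * bt v ^ 2) + (\<Sum>v\<in>V. \<Sum>u\<in>N v. x u * x v)"
      using F5 E3 by linarith
    show ?thesis using X1 X2 E1 E2 F1 by linarith
  qed
  have C1: "(\<Sum>v\<in>V. p v) \<ge> (\<Sum>v\<in>V. p v * y v) - eta * (\<Sum>v\<in>V. p v)"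
  proof -
    have "(\<Sum>v\<in>V. p v * y v - eta * p v) \<le> (\<Sum>v\<in>V. p v)"
    proof (intro sum_mono)
      fix v assume v: "v \<in> V"
      have "p v * y v \<le> p v * (1 + eta)" using yle(1)[OF v] p0[OF v] by (rule mult_left_mono)
      then show "p v * y v - eta * p v \<le> p v" by (simp add: algebra_simps)
    qed
    then show ?thesis by (simp add: sum_subtractf sum_distrib_left)
  qed
  have C2: "(\<Sum>v\<in>V. a v) \<ge> (\<Sum>v\<in>V. a v * y v) - eta * (\<Sum>v\<in>V. a v)"
  proof -
    have "(\<Sum>v\<in>V. a v * y v - eta * a v) \<le> (\<Sum>v\<in>V. a v)"
    proof (intro sum_mono)
      fix v assume v: "v \<in> V"
      have "a v * y v \<le> a v * (1 + eta)" using yle(1)[OF v] a0[OF v] by (rule mult_left_mono)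
      then show "a v * y v - eta * a v \<le> a v" by (simp add: algebra_simps)
    qed
    then show ?thesis by (simp add: sum_subtractf sum_distrib_left)
  qed
  have C3: "(\<Sum>v\<in>V. b v * y v) \<ge> (\<Sum>v\<in>V. b v) - eta * (\<Sum>v\<in>V. b v)"
  proof -
    have "(\<Sum>v\<in>V. b v - eta * b v) \<le> (\<Sum>v\<in>V. b v * y v)"
    proof (intro sum_mono)
      fix v assume v: "v \<in> V"
      have "b v * (1 - eta) \<le> b v * y v" using yle(2)[OF v] b0[OF v] by (rule mult_left_mono)
      then show "b v - eta * b v \<le> b v * y v" by (simp add: algebra_simps)
    qed
    then show ?thesis by (simp add: sum_subtractf sum_distrib_left)
  qed
  have eta0: "eta \<ge> 0" if "V \<noteq> {}"
    using that eps by (meson abs_ge_zero ex_in_conv order_trans)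
  have Sa: "(\<Sum>v\<in>V. a v) \<le> (\<Sum>v\<in>V. mu v)" by (rule sum_mono) (rule ale)
  have Sb: "(\<Sum>v\<in>V. b v) \<le> (\<Sum>v\<in>V. mu v)" by (rule sum_mono) (rule ble)
  have Sa0: "(\<Sum>v\<in>V. a v) \<ge> 0" by (rule sum_nonneg) (rule a0)
  have Sp0: "(\<Sum>v\<in>V. p v) \<ge> 0" by (rule sum_nonneg) (rule p0)
  have Sb0: "(\<Sum>v\<in>V. b v) \<ge> 0" by (rule sum_nonneg) (rule b0)
  have bt_eq: "(\<Sum>v\<in>V. b v) = (\<Sum>v\<in>V. mu v / (1 + real (card {u\<in>V. E v u}) * mu v))"
    by (simp add: b_def bt_def N_def)
  have last: "(\<Sum>v\<in>V. p v + 3 * mu v) = (\<Sum>v\<in>V. p v) + 3 * (\<Sum>v\<in>V. mu v)"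
    by (simp add: sum.distrib sum_distrib_left)
  show ?thesis
  proof (cases "V = {}")
    case True then show ?thesis by simp
  next
    case False
    note e = eta0[OF False]
    have "eta * (\<Sum>v\<in>V. a v) \<le> eta * (\<Sum>v\<in>V. mu v)" using Sa e by (rule mult_left_mono)
    moreover have "eta * (\<Sum>v\<in>V. b v) \<le> eta * (\<Sum>v\<in>V. mu v)" using Sb e by (rule mult_left_mono)
    ultimately show ?thesis
      using I1 G C1 C2 C3 bt_eq last by (simp add: algebra_simps)
  qed
qed


lemma lp_bound:
  fixes V :: "'a set" and E :: "'a \<Rightarrow> 'a \<Rightarrow> bool" and mu p :: "'a \<Rightarrow> real" and q :: real
  assumes fin: "finite V" and sym: "\<And>u v. E u v \<Longrightarrow> E v u"
    and mu0: "\<And>v. v \<in> V \<Longrightarrow> mu v \<ge> 0"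
    and musum: "\<And>v. v \<in> V \<Longrightarrow> (\<Sum>u\<in>{u\<in>V. E v u}. mu u) \<le> q"
    and q0: "0 \<le> q" and q1: "q < 1"
    and p0: "\<And>v. v \<in> V \<Longrightarrow> p v \<ge> 0"
    and pc: "\<And>v. v \<in> V \<Longrightarrow> p v + mu v * (\<Sum>u\<in>{u\<in>V. E v u}. p u) \<ge> mu v"
  shows "(\<Sum>v\<in>V. p v) \<ge> (\<Sum>v\<in>V. mu v / (1 + real (card {u\<in>V. E v u}) * mu v))"
proof (rule ccontr)
  define W where "W = (\<Sum>v\<in>V. mu v / (1 + real (card {u\<in>V. E v u}) * mu v))"
  define K where "K = (\<Sum>v\<in>V. p v + 3 * mu v)"
  assume "\<not> ?thesis"
  then have lt: "(\<Sum>v\<in>V. p v) < W" by (simp add: W_def)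
  have K0: "K \<ge> 0" unfolding K_def by (intro sum_nonneg) (use p0 mu0 in auto)
  define eta where "eta = (W - (\<Sum>v\<in>V. p v)) / (K + 1)"
  have eta0: "eta > 0" using lt K0 by (simp add: eta_def)
  obtain n where n: "q ^ n < eta" using real_arch_pow_inv[OF eta0 q1] by blast
  have musum1: "\<And>v. v \<in> V \<Longrightarrow> (\<Sum>u\<in>{u\<in>V. E v u}. mu u) \<le> 1"
    using musum q1 by (meson less_eq_real_def order_trans)
  note gb = gam_bounds[of V mu E n, OF mu0 musum1]
  note gd = gam_diff[of V mu E q n, OF mu0 musum]
  have "(\<Sum>v\<in>V. p v) \<ge> W - q ^ n * K"
    unfolding W_def K_def
  proof (rule main_ineq[OF fin sym mu0 musum1 p0 pc, where gm = "gam mu V E n"])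
    fix v assume v: "v \<in> V"
    show "gam mu V E n v \<ge> 0" "gam mu V E n v \<le> 1" using gb v by auto
    show "\<bar>1 - (\<Sum>u\<in>{u\<in>V. E v u}. mu u * gam mu V E n u) - gam mu V E n v\<bar> \<le> q ^ n"
      using gd v by simp
  qed
  moreover have "q ^ n * K \<le> eta * K" using n K0 by (simp add: mult_right_mono)
  moreover have "eta * K < W - (\<Sum>v\<in>V. p v)"
  proof -
    have "eta * K < eta * (K + 1)" using eta0 by simp
    also have "\<dots> = W - (\<Sum>v\<in>V. p v)" using K0 by (simp add: eta_def)
    finally show ?thesis .
  qed
  ultimately show False by linarith
qed


lemma card_as_sum:
  assumes "finite V" "I \<subseteq> V"
  shows "real (card I) = (\<Sum>u\<in>V. if u \<in> I then 1 else 0)"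
proof -
  have "(\<Sum>u\<in>{u\<in>V. u \<in> I}. (1::real)) = (\<Sum>u\<in>V. if u \<in> I then 1 else 0)"
    by (rule sum.inter_filter[OF assms(1)])
  then have "(\<Sum>u\<in>V. if u \<in> I then (1::real) else 0) = (\<Sum>u\<in>{u\<in>V. u \<in> I}. 1)" by simp
  also have "{u\<in>V. u \<in> I} = I" using assms(2) by auto
  finally show ?thesis by simp
qed

theorem theorem1p1:
  fixes V :: "'a set" and E :: "'a \<Rightarrow> 'a \<Rightarrow> bool" and lam :: "'a \<Rightarrow> real"
  assumes "simple_graph V E"
    and "\<And>u. u \<in> V \<Longrightarrow> lam u \<ge> 0"
    and "\<And>u. u \<in> V \<Longrightarrow> lam u * real (max_degree V E) < 1"
  shows "expected_size V E lam \<ge>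
           (\<Sum>u\<in>V. lam u / (1 + (real (degree V E u) + 1) * lam u))"
proof -
  have fin: "finite V" and inV: "\<And>u v. E u v \<Longrightarrow> u \<in> V \<and> v \<in> V"
    and sym: "\<And>u v. E u v \<Longrightarrow> E v u" and irr: "\<And>u. \<not> E u u"
    using assms(1) unfolding simple_graph_def by blast+
  note lam0 = assms(2)
  define Ind where "Ind = independent_sets V E"
  define wt where "wt I = weight lam I" for I
  define Z where "Z = partition_fn V E lam"
  define N where "N v = {u\<in>V. E v u}" for v
  define P where "P u = (\<Sum>I\<in>{I\<in>Ind. u \<in> I}. wt I)" for u
  define p where "p u = P u / Z" for u
  have Ind_sub: "I \<subseteq> V" if "I \<in> Ind" for I using that by (simp add: Ind_def independent_sets_def)
  have Ind_ind: "\<not> E x y" if "I \<in> Ind" "x \<in> I" "y \<in> I" for I x y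
    using that by (simp add: Ind_def independent_sets_def)
  have finInd: "finite Ind"
  proof -
    have "Ind \<subseteq> Pow V" using Ind_sub by auto
    then show ?thesis using fin by (meson finite_Pow_iff finite_subset)
  qed
  have wt0: "wt I \<ge> 0" if "I \<subseteq> V" for I
    unfolding wt_def weight_def using that lam0 by (intro prod_nonneg) auto
  have emp: "{} \<in> Ind" by (simp add: Ind_def independent_sets_def)
  have Zeq: "Z = (\<Sum>I\<in>Ind. wt I)" by (simp add: Z_def partition_fn_def Ind_def wt_def)
  have Zpos: "Z \<ge> 1"
  proof -
    have "wt {} \<le> (\<Sum>I\<in>Ind. wt I)"
      by (rule member_le_sum[OF emp]) (use wt0 Ind_sub finInd in auto)
    then show ?thesis by (simp add: Zeq wt_def weight_def)
  qed
  have P0: "P u \<ge> 0" for u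
    unfolding P_def by (intro sum_nonneg) (use wt0 Ind_sub in auto)
  have ES: "expected_size V E lam = (\<Sum>u\<in>V. p u)"
  proof -
    have "expected_size V E lam = (\<Sum>I\<in>Ind. real (card I) * wt I) / Z"
      by (simp add: expected_size_def hardcore_prob_def Ind_def wt_def Z_def sum_divide_distrib)
    also have "(\<Sum>I\<in>Ind. real (card I) * wt I) = (\<Sum>I\<in>Ind. \<Sum>u\<in>V. if u \<in> I then wt I else 0)"
    proof (intro sum.cong refl)
      fix I assume "I \<in> Ind"
      then have "real (card I) = (\<Sum>u\<in>V. if u \<in> I then 1 else 0)" using card_as_sum[OF fin Ind_sub] by blast
      then have "real (card I) * wt I = (\<Sum>u\<in>V. (if u \<in> I then 1 else 0) * wt I)"
        by (simp only: sum_distrib_right)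
      also have "\<dots> = (\<Sum>u\<in>V. if u \<in> I then wt I else 0)"
        by (intro sum.cong refl) simp
      finally show "real (card I) * wt I = (\<Sum>u\<in>V. if u \<in> I then wt I else 0)" .
    qed
    also have "\<dots> = (\<Sum>u\<in>V. \<Sum>I\<in>Ind. if u \<in> I then wt I else 0)" by (rule sum.swap)
    also have "\<dots> = (\<Sum>u\<in>V. P u)" by (simp add: P_def sum.inter_filter[OF finInd])
    finally show ?thesis by (simp add: p_def sum_divide_distrib)
  qed
  have LC: "(1 + lam u) * P u + lam u * (\<Sum>v\<in>N u. P v) \<ge> lam u * Z" if u: "u \<in> V" for u
  proof -
    define B0 where "B0 = {I\<in>Ind. u \<notin> I \<and> (\<forall>v\<in>I. \<not> E u v)}"
    define A where "A = {I\<in>Ind. u \<in> I}"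
    have B0sub: "B0 \<subseteq> Ind" by (auto simp: B0_def)
    have bij: "bij_betw (insert u) B0 A"
    proof (rule bij_betw_byWitness[where f' = "\<lambda>J. J - {u}"])
      show "\<forall>I\<in>B0. insert u I - {u} = I" by (auto simp: B0_def)
      show "\<forall>J\<in>A. insert u (J - {u}) = J" by (auto simp: A_def)
      show "insert u ` B0 \<subseteq> A"
      proof
        fix J assume "J \<in> insert u ` B0"
        then obtain I where I: "I \<in> B0" and J: "J = insert u I" by blast
        have "J \<subseteq> V" using I u Ind_sub by (auto simp: B0_def J)
        moreover have "\<forall>x\<in>J. \<forall>y\<in>J. \<not> E x y"
        proof (intro ballI)
          fix x y assume x: "x \<in> J" and y: "y \<in> J"
          have I1: "I \<in> Ind" and I2: "\<forall>v\<in>I. \<not> E u v" using I by (auto simp: B0_def)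
          show "\<not> E x y"
          proof (cases "x = u")
            case True
            then show ?thesis using y I2 irr unfolding J by auto
          next
            case False
            then have xI: "x \<in> I" using x J by auto
            show ?thesis
            proof (cases "y = u")
              case True
              then show ?thesis using xI I2 sym by blast
            next
              case False
              then have "y \<in> I" using y J by auto
              then show ?thesis using Ind_ind[OF I1 xI] by blast
            qed
          qed
        qed
        ultimately show "J \<in> A" by (simp add: A_def Ind_def independent_sets_def J)
      qed
      show "(\<lambda>J. J - {u}) ` A \<subseteq> B0"
      proof
        fix J assume "J \<in> (\<lambda>J. J - {u}) ` A"
        then obtain I where I: "I \<in> A" and J: "J = I - {u}" by blast
        have I1: "I \<in> Ind" "u \<in> I" using I by (auto simp: A_def)
        have "I - {u} \<subseteq> V" using Ind_sub[OF I1(1)] by auto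
        moreover have "\<forall>x\<in>I - {u}. \<forall>y\<in>I - {u}. \<not> E x y" using Ind_ind[OF I1(1)] by blast
        ultimately have "I - {u} \<in> Ind" by (simp add: Ind_def independent_sets_def)
        moreover have "\<forall>v\<in>I - {u}. \<not> E u v" using Ind_ind[OF I1(1) I1(2)] by blast
        ultimately show "J \<in> B0" by (simp add: B0_def J)
      qed
    qed
    define W0 where "W0 = (\<Sum>I\<in>B0. wt I)"
    have PA: "P u = lam u * W0"
    proof -
      have "P u = (\<Sum>J\<in>A. wt J)" by (simp add: P_def A_def)
      also have "\<dots> = (\<Sum>I\<in>B0. wt (insert u I))"
        using sum.reindex_bij_betw[OF bij, of wt] by simp
      also have "\<dots> = (\<Sum>I\<in>B0. lam u * wt I)"
      proof (intro sum.cong refl)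
        fix I assume "I \<in> B0"
        then have "finite I" "u \<notin> I" using Ind_sub fin by (auto simp: B0_def intro: finite_subset)
        then show "wt (insert u I) = lam u * wt I" by (simp add: wt_def weight_def)
      qed
      finally show ?thesis by (simp add: W0_def sum_distrib_left)
    qed
    have ZB: "Z \<le> W0 + P u + (\<Sum>v\<in>N u. P v)"
    proof -
      have "Z \<le> (\<Sum>I\<in>Ind. (if I \<in> B0 then wt I else 0) + (if u \<in> I then wt I else 0)
                + (\<Sum>v\<in>N u. if v \<in> I then wt I else 0))"
        unfolding Zeq
      proof (intro sum_mono)
        fix I assume I: "I \<in> Ind"
        have w0: "wt I \<ge> 0" using wt0 Ind_sub I by blast
        have s0: "(\<Sum>v\<in>N u. if v \<in> I then wt I else 0) \<ge> 0" by (intro sum_nonneg) (simp add: w0)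
        show "wt I \<le> (if I \<in> B0 then wt I else 0) + (if u \<in> I then wt I else 0)
                + (\<Sum>v\<in>N u. if v \<in> I then wt I else 0)"
        proof (cases "u \<in> I")
          case True then show ?thesis using s0 w0 by simp
        next
          case False
          show ?thesis
          proof (cases "\<exists>v\<in>I. E u v")
            case True
            then obtain v where v: "v \<in> I" "E u v" by blast
            have vN: "v \<in> N u" using v inV by (simp add: N_def)
            have fN: "finite (N u)" using fin by (simp add: N_def)
            have "wt I = (if v \<in> I then wt I else 0)" using v by simp
            also have "\<dots> \<le> (\<Sum>v\<in>N u. if v \<in> I then wt I else 0)"
              by (rule member_le_sum[OF vN]) (simp_all add: w0 fN)
            finally show ?thesis using False w0 by simp
          next
            case F2: False
            then have "I \<in> B0" using I False by (simp add: B0_def)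
            then show ?thesis using s0 w0 by simp
          qed
        qed
      qed
      also have "\<dots> = (\<Sum>I\<in>Ind. if I \<in> B0 then wt I else 0) + (\<Sum>I\<in>Ind. if u \<in> I then wt I else 0)
                + (\<Sum>I\<in>Ind. \<Sum>v\<in>N u. if v \<in> I then wt I else 0)"
        by (simp add: sum.distrib)
      also have "(\<Sum>I\<in>Ind. \<Sum>v\<in>N u. if v \<in> I then wt I else 0) = (\<Sum>v\<in>N u. \<Sum>I\<in>Ind. if v \<in> I then wt I else 0)"
        by (rule sum.swap)
      also have "\<dots> = (\<Sum>v\<in>N u. P v)" by (simp add: P_def sum.inter_filter[OF finInd])
      also have "(\<Sum>I\<in>Ind. if I \<in> B0 then wt I else 0) = W0"
      proof -
        have "(\<Sum>I\<in>Ind. if I \<in> B0 then wt I else 0) = (\<Sum>I\<in>{I\<in>Ind. I \<in> B0}. wt I)"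
          by (simp add: sum.inter_filter[OF finInd])
        also have "{I\<in>Ind. I \<in> B0} = B0" using B0sub by auto
        finally show ?thesis by (simp add: W0_def)
      qed
      also have "(\<Sum>I\<in>Ind. if u \<in> I then wt I else 0) = P u"
        by (simp add: P_def sum.inter_filter[OF finInd])
      finally show ?thesis .
    qed
    have "lam u * Z \<le> lam u * (W0 + P u + (\<Sum>v\<in>N u. P v))"
      using ZB lam0[OF u] by (rule mult_left_mono)
    then show ?thesis using PA by (simp add: algebra_simps)
  qed
  define D where "D = max_degree V E"
  define mu where "mu u = lam u / (1 + lam u)" for u
  define q where "q = real D / (real D + 1)"
  have degD: "degree V E v \<le> D" if "v \<in> V" for v
  proof -
    have "V \<noteq> {}" using that by auto
    then show ?thesis unfolding D_def max_degree_def using fin that by simp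
  qed
  have mu0: "mu v \<ge> 0" if "v \<in> V" for v using lam0[OF that] by (simp add: mu_def)
  have mule: "mu v \<le> 1 / (real D + 1)" if "v \<in> V" for v
  proof -
    have "lam v * real D < 1" using assms(3)[OF that] by (simp add: D_def)
    then show ?thesis using lam0[OF that] by (simp add: mu_def field_simps)
  qed
  have musum: "(\<Sum>u\<in>{u\<in>V. E v u}. mu u) \<le> q" if v: "v \<in> V" for v
  proof -
    have "(\<Sum>u\<in>{u\<in>V. E v u}. mu u) \<le> real (card {u\<in>V. E v u}) * (1 / (real D + 1))"
      by (rule sum_bounded_above) (simp add: mule)
    also have "\<dots> \<le> real D * (1 / (real D + 1))"
      using degD[OF v] by (intro mult_right_mono) (simp_all add: degree_def)
    finally show ?thesis by (simp add: q_def)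
  qed
  have q0: "0 \<le> q" and q1: "q < 1" by (simp_all add: q_def)
  have p0: "p v \<ge> 0" for v using P0 Zpos by (simp add: p_def)
  have pc: "p v + mu v * (\<Sum>u\<in>{u\<in>V. E v u}. p u) \<ge> mu v" if v: "v \<in> V" for v
  proof -
    have l: "lam v \<ge> 0" using lam0[OF v] .
    define SP where "SP = (\<Sum>u\<in>N v. P u)"
    have Sp: "(\<Sum>u\<in>{u\<in>V. E v u}. p u) = SP / Z"
      by (simp add: p_def N_def SP_def sum_divide_distrib)
    have lc: "(1 + lam v) * P v + lam v * SP \<ge> lam v * Z" using LC[OF v] by (simp add: SP_def)
    have pos: "(1 + lam v) * Z > 0" using l Zpos by (simp add: add_pos_nonneg)
    have m: "mu v * (1 + lam v) = lam v" using l by (simp add: mu_def add_pos_nonneg)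
    have e1: "(1 + lam v) * (P v + mu v * SP) = (1 + lam v) * P v + (mu v * (1 + lam v)) * SP"
      by (simp add: algebra_simps)
    have e2: "(1 + lam v) * (mu v * Z) = (mu v * (1 + lam v)) * Z" by (simp add: algebra_simps)
    have "(1 + lam v) * (mu v * Z) \<le> (1 + lam v) * (P v + mu v * SP)"
      unfolding e1 e2 m using lc by simp
    then have k: "mu v * Z \<le> P v + mu v * SP"
      using l by (simp add: add_pos_nonneg mult_le_cancel_left_pos)
    have "p v + mu v * (\<Sum>u\<in>{u\<in>V. E v u}. p u) = (P v + mu v * SP) / Z"
      unfolding Sp by (simp add: p_def add_divide_distrib)
    also have "\<dots> \<ge> (mu v * Z) / Z" using k Zpos by (intro divide_right_mono) simp_all
    also have "(mu v * Z) / Z = mu v" using Zpos by simp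
    finally show ?thesis .
  qed
  have main: "(\<Sum>v\<in>V. p v) \<ge> (\<Sum>v\<in>V. mu v / (1 + real (card {u\<in>V. E v u}) * mu v))"
    by (rule lp_bound[OF fin sym mu0 musum q0 q1 p0 pc])
  have eqs: "(\<Sum>v\<in>V. mu v / (1 + real (card {u\<in>V. E v u}) * mu v))
      = (\<Sum>u\<in>V. lam u / (1 + (real (degree V E u) + 1) * lam u))"
  proof (intro sum.cong refl)
    fix v assume v: "v \<in> V"
    have l: "lam v \<ge> 0" using lam0[OF v] .
    show "mu v / (1 + real (card {u\<in>V. E v u}) * mu v) = lam v / (1 + (real (degree V E v) + 1) * lam v)"
    proof -
      define d where "d = real (card {u\<in>V. E v u})"
      have o: "1 + lam v > 0" using l by simp
      have Y: "1 + (d + 1) * lam v > 0" using l by (simp add: d_def add_pos_nonneg)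
      have X: "1 + d * mu v = (1 + (d + 1) * lam v) / (1 + lam v)"
        using o by (simp add: mu_def field_simps)
      have "mu v / (1 + d * mu v) = (mu v * (1 + lam v)) / (1 + (d + 1) * lam v)"
        unfolding X using o Y by simp
      also have "mu v * (1 + lam v) = lam v" using o by (simp add: mu_def)
      finally show ?thesis by (simp add: d_def degree_def)
    qed
  qed
  show ?thesis using main eqs ES by simp
qed

end
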